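(* Let $A$ be a binary $n\times m$ matrix with $R_{binary}(A)=k$ whose binary base graph has at least two (distinct) sources $U_1$ and $U_2$; regard $U_1$ and $U_2$ as $n\times k$ matrices whose columns are the vectors of the respective bases. Let $d$ be a positive integer and let $A''$ be the block matrix with $d$ block rows obtained by appending to $I_d\otimes A$ (the block-diagonal matrix with $d$ copies of $A$ on the diagonal and zeros elsewhere) the matrix $I_d\otimes (U_1\,|\,U_2)$, i.e. $A''=(I_d\otimes A\;|\;I_d\otimes(U_1|U_2))$, where the $i$-th block row contains $A$ in the $i$-th diagonal block of the first part and $(U_1|U_2)$ in the $i$-th block of the second part. Then $R_{binary}(A'')\ge kd+d$.
   Context: $R_{binary}(M)$ for a binary $p\times q$ matrix $M$ is the least $r$ with $M=UV$, $U\in\{0,1\}^{p\times r}$, $V\in\{0,1\}^{r\times q}$, ordinary arithmetic. A set $X$ of $\{0,1\}$-vectors spans a vector $y$ (binary sense) if $y=\sum_{x\in X}c_xx$ with $c_x\in\{0,1\}$ and ordinary addition; it spans a set $Y$ if it spans each vector in $Y$. A binary base of $A$ is a set of $\{0,1\}$ column vectors spanning every column of $A$, of minimum cardinality among such spanning sets. The binary base graph of $A$ is the directed graph whose vertices are the binary bases of $A$, with an edge from base $U$ to a different base $V$ whenever $U$ spans $V$. A source is a vertex with no incoming edges. $(M|N)$ denotes horizontal concatenation and $\otimes$ the Kronecker product. *)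

theory Defs
  imports "Jordan_Normal_Form.Matrix"
begin

text \<open>Binary matrices/vectors: entries in {0,1}, ordinary arithmetic over nat.\<close>

definition binary_mat :: "nat mat \<Rightarrow> bool" where
  "binary_mat M \<longleftrightarrow> (\<forall>i<dim_row M. \<forall>j<dim_col M. M $$ (i,j) \<in> {0,1})"

definition binary_vec :: "nat vec \<Rightarrow> bool" where
  "binary_vec v \<longleftrightarrow> (\<forall>i<dim_vec v. v $ i \<in> {0,1})"

definition R_binary :: "nat mat \<Rightarrow> nat" where
  "R_binary M = (LEAST r. \<exists>U V. U \<in> carrier_mat (dim_row M) r \<and> V \<in> carrier_mat r (dim_col M)
       \<and> binary_mat U \<and> binary_mat V \<and> M = U * V)"

definition bspans :: "nat vec set \<Rightarrow> nat vec \<Rightarrow> bool" where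
  "bspans X y \<longleftrightarrow> (\<exists>c. (\<forall>x\<in>X. c x \<in> {0::nat,1}) \<and>
       (\<forall>i<dim_vec y. y $ i = (\<Sum>x\<in>X. c x * x $ i)))"

definition bspans_set :: "nat vec set \<Rightarrow> nat vec set \<Rightarrow> bool" where
  "bspans_set X Y \<longleftrightarrow> (\<forall>y\<in>Y. bspans X y)"

definition binary_spanning :: "nat mat \<Rightarrow> nat vec set \<Rightarrow> bool" where
  "binary_spanning A X \<longleftrightarrow> finite X \<and> (\<forall>x\<in>X. binary_vec x \<and> dim_vec x = dim_row A)
      \<and> bspans_set X (set (cols A))"

definition binary_base :: "nat mat \<Rightarrow> nat vec set \<Rightarrow> bool" where
  "binary_base A X \<longleftrightarrow> binary_spanning A X \<and> (\<forall>Y. binary_spanning A Y \<longrightarrow> card X \<le> card Y)"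

definition base_graph_edge :: "nat mat \<Rightarrow> nat vec set \<Rightarrow> nat vec set \<Rightarrow> bool" where
  "base_graph_edge A U V \<longleftrightarrow> binary_base A U \<and> binary_base A V \<and> U \<noteq> V \<and> bspans_set U V"

definition base_graph_source :: "nat mat \<Rightarrow> nat vec set \<Rightarrow> bool" where
  "base_graph_source A V \<longleftrightarrow> binary_base A V \<and> \<not> (\<exists>U. base_graph_edge A U V)"

definition hconcat :: "'a mat \<Rightarrow> 'a mat \<Rightarrow> 'a mat" where
  "hconcat M N = mat (dim_row M) (dim_col M + dim_col N)
     (\<lambda>(i,j). if j < dim_col M then M $$ (i,j) else N $$ (i, j - dim_col M))"

definition kron_id :: "nat \<Rightarrow> 'a::zero mat \<Rightarrow> 'a mat" where
  "kron_id d B = mat (d * dim_row B) (d * dim_col B)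
     (\<lambda>(i,j). if i div dim_row B = j div dim_col B
              then B $$ (i mod dim_row B, j mod dim_col B) else 0)"

end

theory Submission
  imports Defs
begin

lemma mult_entry:
  assumes "U \<in> carrier_mat N r" "V \<in> carrier_mat r M" "i < N" "c < M"
  shows "(U * V) $$ (i,c) = (\<Sum>l<r. U $$ (i,l) * V $$ (l,c))"
  using assms by (auto simp: scalar_prod_def lessThan_atLeast0 intro!: sum.cong)

definition blk :: "nat mat \<Rightarrow> nat \<Rightarrow> nat \<Rightarrow> nat set" where
  "blk U n j = {l. l < dim_col U \<and> col U l \<noteq> 0\<^sub>v (dim_row U) \<and> (\<forall>i<dim_row U. i div n \<noteq> j \<longrightarrow> U $$ (i,l) = 0)}"

definition res :: "nat mat \<Rightarrow> nat \<Rightarrow> nat \<Rightarrow> nat \<Rightarrow> nat vec" where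
  "res U n j l = vec n (\<lambda>t. U $$ (j*n+t, l))"

lemma blk_disj: "j \<noteq> j' \<Longrightarrow> blk U n j \<inter> blk U n j' = {}"
proof (rule ccontr)
  assume "j \<noteq> j'" "blk U n j \<inter> blk U n j' \<noteq> {}"
  then obtain l where l: "l \<in> blk U n j" "l \<in> blk U n j'" by blast
  have "col U l = 0\<^sub>v (dim_row U)"
  proof (rule eq_vecI)
    fix i assume "i < dim_vec (0\<^sub>v (dim_row U) :: nat vec)"
    then have i: "i < dim_row U" by simp
    have "i div n \<noteq> j \<or> i div n \<noteq> j'" using \<open>j \<noteq> j'\<close> by auto
    then have "U $$ (i,l) = 0" using l i unfolding blk_def by auto
    then show "col U l $ i = 0\<^sub>v (dim_row U) $ i" using i l unfolding blk_def by auto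
  qed auto
  then show False using l unfolding blk_def by auto
qed

lemma image_sum_binary:
  fixes g :: "'b \<Rightarrow> nat"
  assumes "finite X" "(\<Sum>x\<in>X. g (f x)) \<in> {0,1}"
  shows "(\<Sum>w\<in>f ` X. g w) = (\<Sum>x\<in>X. g (f x))"
proof -
  have le: "(\<Sum>w\<in>f ` X. g w) \<le> (\<Sum>x\<in>X. g (f x))"
    using sum_image_le[of X g f] assms(1) by (simp add: o_def)
  show ?thesis
  proof (cases "(\<Sum>x\<in>X. g (f x)) = 0")
    case True then show ?thesis using le by simp
  next
    case False
    then obtain x where x: "x \<in> X" "g (f x) \<noteq> 0" by (metis sum.neutral)
    have "g (f x) \<le> (\<Sum>w\<in>f ` X. g w)"
      by (rule member_le_sum) (use x assms in auto)
    then show ?thesis using le x False assms(2) by auto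
  qed
qed

lemma span_block:
  fixes U V :: "nat mat" and y :: "nat vec"
  assumes U: "U \<in> carrier_mat N r" and V: "V \<in> carrier_mat r M" and bV: "binary_mat V"
    and c: "c < M" and inb: "\<And>t. t < n \<Longrightarrow> j*n+t < N"
    and dy: "dim_vec y = n" and yb: "\<And>t. t < n \<Longrightarrow> y $ t \<in> {0,1}"
    and yv: "\<And>t. t < n \<Longrightarrow> (U*V) $$ (j*n+t, c) = y $ t"
    and z: "\<And>i. i < N \<Longrightarrow> i div n \<noteq> j \<Longrightarrow> (U*V) $$ (i,c) = 0"
  shows "bspans (res U n j ` blk U n j) y"
proof -
  define L where "L = {l. l < r \<and> V $$ (l,c) \<noteq> 0}"
  define X where "X = L \<inter> blk U n j"
  have fa: "U $$ (i,l) = 0" if "l < r" "V $$ (l,c) \<noteq> 0" "i < N" "i div n \<noteq> j" for i l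
  proof -
    have "(\<Sum>l<r. U $$ (i,l) * V $$ (l,c)) = 0" using z[OF that(3,4)] mult_entry[OF U V that(3) c] by simp
    then have "U $$ (i,l) * V $$ (l,c) = 0" using that(1) by simp
    then show ?thesis using that(2) by simp
  qed
  have V1: "V $$ (l,c) \<noteq> 0 \<Longrightarrow> V $$ (l,c) = 1" if "l < r" for l
    using bV that c V unfolding binary_mat_def by (metis carrier_matD insert_iff singletonD)
  have finX: "finite X" unfolding X_def L_def by auto
  have fb: "y $ t = (\<Sum>l\<in>X. res U n j l $ t)" if t: "t < n" for t
  proof -
    have "y $ t = (\<Sum>l<r. U $$ (j*n+t,l) * V $$ (l,c))"
      using yv[OF t] mult_entry[OF U V inb[OF t] c] by simp
    also have "\<dots> = (\<Sum>l<r. if l \<in> X then U $$ (j*n+t,l) else 0)"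
    proof (rule sum.cong[OF refl])
      fix l assume l: "l \<in> {..<r}"
      show "U $$ (j*n+t,l) * V $$ (l,c) = (if l \<in> X then U $$ (j*n+t,l) else 0)"
      proof (cases "V $$ (l,c) = 0")
        case True
        then show ?thesis using l unfolding X_def L_def by auto
      next
        case False
        then have v1: "V $$ (l,c) = 1" using V1 l by auto
        show ?thesis
        proof (cases "col U l = 0\<^sub>v (dim_row U)")
          case True
          have "U $$ (j*n+t,l) = col U l $ (j*n+t)" using U l inb[OF t] by auto
          also have "\<dots> = 0" using True U inb[OF t] by simp
          finally show ?thesis using v1 by simp
        next
          case False
          have "l \<in> blk U n j" unfolding blk_def using False U l fa[of l] \<open>V $$ (l,c) \<noteq> 0\<close> by auto
          then show ?thesis using v1 l \<open>V $$ (l,c) \<noteq> 0\<close> unfolding X_def L_def by auto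
        qed
      qed
    qed
    also have "\<dots> = (\<Sum>l\<in>X. U $$ (j*n+t,l))"
      by (subst sum.inter_restrict[symmetric]) (auto simp: X_def L_def intro!: sum.cong)
    also have "\<dots> = (\<Sum>l\<in>X. res U n j l $ t)" using t by (simp add: res_def)
    finally show ?thesis .
  qed
  define cf where "cf w = (if w \<in> res U n j ` X then 1 else (0::nat))" for w
  show ?thesis unfolding bspans_def
  proof (intro exI[of _ cf] conjI ballI allI impI)
    fix w show "cf w \<in> {0,1}" by (simp add: cf_def)
  next
    fix t assume "t < dim_vec y"
    then have t: "t < n" using dy by simp
    have sub: "res U n j ` X \<subseteq> res U n j ` blk U n j" unfolding X_def by auto
    have finW: "finite (res U n j ` blk U n j)" unfolding blk_def by auto
    have "(\<Sum>w\<in>res U n j ` blk U n j. cf w * w $ t) = (\<Sum>w\<in>res U n j ` blk U n j. if w \<in> res U n j ` X then w $ t else 0)"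
      by (intro sum.cong) (auto simp: cf_def)
    also have "\<dots> = (\<Sum>w\<in>res U n j ` blk U n j \<inter> res U n j ` X. w $ t)"
      using sum.inter_restrict[OF finW, of "\<lambda>w. w $ t" "res U n j ` X"] by simp
    also have "\<dots> = (\<Sum>w\<in>res U n j ` X. w $ t)" using sub by (simp add: Int_absorb1)
    also have "\<dots> = (\<Sum>l\<in>X. res U n j l $ t)"
      by (rule image_sum_binary[OF finX]) (use fb[OF t] yb[OF t] in simp)
    finally show "y $ t = (\<Sum>w\<in>res U n j ` blk U n j. cf w * w $ t)" using fb[OF t] by simp
  qed
qed

lemma core:
  assumes s1: "base_graph_source A U1" and s2: "base_graph_source A U2" and ne: "U1 \<noteq> U2"
    and W: "binary_spanning A W" and w1: "bspans_set W U1" and w2: "bspans_set W U2"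
  shows "card U1 < card W"
proof (rule ccontr)
  assume "\<not> card U1 < card W"
  then have le: "card W \<le> card U1" by simp
  have b1: "binary_base A U1" using s1 unfolding base_graph_source_def by simp
  have b2: "binary_base A U2" using s2 unfolding base_graph_source_def by simp
  have bW: "binary_base A W" unfolding binary_base_def
    using W le b1 unfolding binary_base_def by (meson le_trans)
  have "W = U1" using s1 bW w1 unfolding base_graph_source_def base_graph_edge_def by blast
  moreover have "W = U2" using s2 bW w2 unfolding base_graph_source_def base_graph_edge_def by blast
  ultimately show False using ne by simp
qed

lemma rank_le:
  assumes A: "A \<in> carrier_mat n m" and b1: "binary_base A U1"
    and U1m: "U1m \<in> carrier_mat n (card U1)" and cU: "set (cols U1m) = U1"
  shows "R_binary A \<le> card U1"
proof -
  let ?p = "card U1"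
  have sp: "binary_spanning A U1" using b1 unfolding binary_base_def by simp
  have bv: "\<And>x. x \<in> U1 \<Longrightarrow> binary_vec x \<and> dim_vec x = n"
    using sp A unfolding binary_spanning_def by auto
  have "\<forall>a. \<exists>cf. a < m \<longrightarrow> (\<forall>x\<in>U1. cf x \<in> {0::nat,1}) \<and> (\<forall>i<n. col A a $ i = (\<Sum>x\<in>U1. cf x * x $ i))"
  proof (intro allI impI)
    fix a
    show "\<exists>cf. a < m \<longrightarrow> (\<forall>x\<in>U1. cf x \<in> {0::nat,1}) \<and> (\<forall>i<n. col A a $ i = (\<Sum>x\<in>U1. cf x * x $ i))"
    proof (cases "a < m")
      case True
      have "col A a \<in> set (cols A)" using A True by (metis carrier_matD(2) cols_length cols_nth nth_mem)
      then have "bspans U1 (col A a)" using sp unfolding binary_spanning_def bspans_set_def by auto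
      then show ?thesis using A True unfolding bspans_def by auto
    qed simp
  qed
  then obtain CF where CF: "\<And>a. a < m \<Longrightarrow> (\<forall>x\<in>U1. CF a x \<in> {0::nat,1}) \<and> (\<forall>i<n. col A a $ i = (\<Sum>x\<in>U1. CF a x * x $ i))"
    by metis
  define V where "V = mat ?p m (\<lambda>(l,a). CF a (col U1m l))"
  have dist: "distinct (cols U1m)" using U1m cU by (intro card_distinct) auto
  have colin: "l < ?p \<Longrightarrow> col U1m l \<in> U1" for l
    using U1m cU by (metis carrier_matD(2) cols_length cols_nth nth_mem)
  have sumeq: "(\<Sum>x\<in>U1. g x) = (\<Sum>l<?p. g (col U1m l))" for g :: "nat vec \<Rightarrow> nat"
  proof -
    have "(\<Sum>x\<in>U1. g x) = sum_list (map g (cols U1m))"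
      using sum.distinct_set_conv_list[OF dist, of g] cU by simp
    also have "\<dots> = (\<Sum>l<?p. g (col U1m l))"
      using U1m by (simp add: sum_list_sum_nth lessThan_atLeast0)
    finally show ?thesis .
  qed
  have "A = U1m * V"
  proof (rule eq_matI)
    fix i a assume i: "i < dim_row (U1m * V)" and a: "a < dim_col (U1m * V)"
    then have i': "i < n" and a': "a < m" using U1m by (auto simp: V_def)
    have "(U1m * V) $$ (i,a) = (\<Sum>l<?p. U1m $$ (i,l) * V $$ (l,a))"
      by (rule mult_entry[OF U1m _ i' a']) (simp add: V_def)
    also have "\<dots> = (\<Sum>l<?p. CF a (col U1m l) * col U1m l $ i)"
      using U1m i' a' by (auto simp: V_def intro!: sum.cong)
    also have "\<dots> = (\<Sum>x\<in>U1. CF a x * x $ i)" by (rule sumeq[symmetric])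
    also have "\<dots> = A $$ (i,a)" using CF[OF a'] i' a' A by auto
    finally show "A $$ (i,a) = (U1m * V) $$ (i,a)" by simp
  qed (use A U1m in \<open>auto simp: V_def\<close>)
  moreover have "binary_mat U1m" unfolding binary_mat_def
  proof (intro allI impI)
    fix i l assume "i < dim_row U1m" "l < dim_col U1m"
    then show "U1m $$ (i,l) \<in> {0,1}" using colin[of l] bv[of "col U1m l"] U1m
      unfolding binary_vec_def by (metis carrier_matD index_col)
  qed
  moreover have "binary_mat V" unfolding binary_mat_def V_def using CF colin by auto
  ultimately have "\<exists>U V. U \<in> carrier_mat (dim_row A) ?p \<and> V \<in> carrier_mat ?p (dim_col A)
       \<and> binary_mat U \<and> binary_mat V \<and> A = U * V"
    using A U1m by (intro exI[of _ U1m] exI[of _ V]) (auto simp: V_def)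
  then show ?thesis unfolding R_binary_def by (rule Least_le)
qed

lemma divmod_blk: "t < (n::nat) \<Longrightarrow> (j*n+t) div n = j \<and> (j*n+t) mod n = t"
  by (simp add: add.commute)

theorem mainTheorem14:
  fixes A U1m U2m :: "nat mat" and U1 U2 :: "nat vec set" and n m k d :: nat
  assumes "A \<in> carrier_mat n m" and "binary_mat A"
    and "R_binary A = k"
    and "base_graph_source A U1" and "base_graph_source A U2" and "U1 \<noteq> U2"
    and "U1m \<in> carrier_mat n (card U1)" and "set (cols U1m) = U1"
    and "U2m \<in> carrier_mat n (card U2)" and "set (cols U2m) = U2"
    and "d > 0"
  shows "R_binary (hconcat (kron_id d A) (kron_id d (hconcat U1m U2m))) \<ge> k * d + d"
proof -
  note A = assms(1) and bA = assms(2) and s1 = assms(4) and s2 = assms(5) and ne = assms(6)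
    and U1m = assms(7) and cU1 = assms(8) and U2m = assms(9) and cU2 = assms(10)
  define p1 where "p1 = card U1"
  define p2 where "p2 = card U2"
  define Q where "Q = p1 + p2"
  define P where "P = hconcat U1m U2m"
  define B where "B = hconcat (kron_id d A) (kron_id d P)"
  have b1: "binary_base A U1" using s1 unfolding base_graph_source_def by simp
  have b2: "binary_base A U2" using s2 unfolding base_graph_source_def by simp
  have bv1: "\<And>x. x \<in> U1 \<Longrightarrow> binary_vec x \<and> dim_vec x = n"
    using b1 A unfolding binary_base_def binary_spanning_def by auto
  have bv2: "\<And>x. x \<in> U2 \<Longrightarrow> binary_vec x \<and> dim_vec x = n"
    using b2 A unfolding binary_base_def binary_spanning_def by auto
  have npos: "n > 0"
  proof (rule ccontr)
    assume "\<not> n > 0"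
    then have n0: "n = 0" by simp
    have "binary_spanning A {}" unfolding binary_spanning_def bspans_set_def bspans_def
      using A n0 by (auto simp: cols_def)
    then have "card U1 \<le> 0" "card U2 \<le> 0" using b1 b2 unfolding binary_base_def by force+
    moreover have "finite U1" "finite U2" using b1 b2 unfolding binary_base_def binary_spanning_def by auto
    ultimately show False using ne by simp
  qed
  have P_dim: "P \<in> carrier_mat n Q" using U1m U2m by (simp add: P_def hconcat_def Q_def p1_def p2_def)
  have P_ent: "P $$ (t,b) = (if b < p1 then U1m $$ (t,b) else U2m $$ (t, b - p1))" if "t < n" "b < Q" for t b
    using that U1m U2m by (simp add: P_def hconcat_def Q_def p1_def p2_def)
  have B_dim: "B \<in> carrier_mat (d*n) (d*m + d*Q)" using A P_dim by (simp add: B_def hconcat_def kron_id_def)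
  have B_ent: "B $$ (i,c) = (if c < d*m then (if i div n = c div m then A $$ (i mod n, c mod m) else 0)
     else (if i div n = (c - d*m) div Q then P $$ (i mod n, (c - d*m) mod Q) else 0))"
    if "i < d*n" "c < d*m + d*Q" for i c
    using that A P_dim by (simp add: B_def hconcat_def kron_id_def)
  have bU1m: "U1m $$ (t,b) \<in> {0,1}" if "t < n" "b < p1" for t b
  proof -
    have "col U1m b \<in> U1" using U1m cU1 that by (metis carrier_matD(2) cols_length cols_nth nth_mem p1_def)
    then show ?thesis using bv1 that U1m unfolding binary_vec_def p1_def by (metis carrier_matD index_col)
  qed
  have bU2m: "U2m $$ (t,b) \<in> {0,1}" if "t < n" "b < p2" for t b
  proof -
    have "col U2m b \<in> U2" using U2m cU2 that by (metis carrier_matD(2) cols_length cols_nth nth_mem p2_def)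
    then show ?thesis using bv2 that U2m unfolding binary_vec_def p2_def by (metis carrier_matD index_col)
  qed
  have bB: "binary_mat B" unfolding binary_mat_def
  proof (intro allI impI)
    fix i c assume i: "i < dim_row B" and c: "c < dim_col B"
    have i': "i < d*n" and c': "c < d*m + d*Q" using i c B_dim by auto
    have imod: "i mod n < n" using npos by simp
    show "B $$ (i,c) \<in> {0,1}"
    proof (cases "c < d*m")
      case True
      have "c mod m < m" using True by (metis mod_less_divisor mult_0_right neq0_conv not_less0)
      then show ?thesis using B_ent[OF i' c'] True bA A imod unfolding binary_mat_def by auto
    next
      case False
      have "Q > 0" using c' False by (cases Q) auto
      then have "(c - d*m) mod Q < Q" by simp
      then show ?thesis using B_ent[OF i' c'] False P_ent[OF imod] bU1m[OF imod] bU2m[OF imod]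
        unfolding Q_def by auto
    qed
  qed
  have main: "d * (p1 + 1) \<le> r"
    if U: "U \<in> carrier_mat (d*n) r" and V: "V \<in> carrier_mat r (d*m + d*Q)"
      and bU: "binary_mat U" and bV: "binary_mat V" and eq: "B = U * V" for U V r
  proof -
    have inb: "\<And>j t. j < d \<Longrightarrow> t < n \<Longrightarrow> j*n+t < d*n"
    proof -
      fix j t assume "j < d" "t < n"
      then have "j*n + t < j*n + n" by simp
      also have "\<dots> = (j+1)*n" by simp
      also have "\<dots> \<le> d*n" using \<open>j < d\<close> by (intro mult_right_mono) auto
      finally show "j*n+t < d*n" .
    qed
    have cnt: "p1 + 1 \<le> card (blk U n j)" if j: "j < d" for j
    proof -
      define W where "W = res U n j ` blk U n j"
      have finb: "finite (blk U n j)" unfolding blk_def by auto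
      have spanY: "bspans W y" if "dim_vec y = n" "\<And>t. t < n \<Longrightarrow> y $ t \<in> {0,1}" "c < d*m + d*Q"
        "\<And>t. t < n \<Longrightarrow> B $$ (j*n+t, c) = y $ t" "\<And>i. i < d*n \<Longrightarrow> i div n \<noteq> j \<Longrightarrow> B $$ (i,c) = 0" for y c
        unfolding W_def using span_block[OF U V bV that(3) inb[OF j] that(1,2)] that(4,5) eq by auto
      have Wb: "binary_spanning A W" unfolding binary_spanning_def bspans_set_def
      proof (intro conjI ballI)
        show "finite W" unfolding W_def using finb by simp
      next
        fix x assume "x \<in> W"
        then obtain l where l: "l \<in> blk U n j" "x = res U n j l" unfolding W_def by auto
        then have lr: "l < r" using U unfolding blk_def by auto
        show "binary_vec x"
          using l lr inb[OF j] bU U A unfolding binary_vec_def binary_mat_def res_def by auto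
      next
        fix x assume "x \<in> W"
        then obtain l where l: "l \<in> blk U n j" "x = res U n j l" unfolding W_def by auto
        show "dim_vec x = dim_row A"
          using l A unfolding res_def by auto
      next
        fix y assume "y \<in> set (cols A)"
        then obtain a where a: "a < m" "y = col A a" using A by (metis carrier_matD(2) cols_length cols_nth in_set_conv_nth)
        have jm: "j*m + a < d*m"
        proof -
          have "j*m + a < (j+1)*m" using a by simp
          also have "\<dots> \<le> d*m" using j by (intro mult_right_mono) auto
          finally show ?thesis .
        qed
        have dv: "(j*m+a) div m = j \<and> (j*m+a) mod m = a" using divmod_blk[OF a(1)] by simp
        show "bspans W y"
        proof (rule spanY[of y "j*m+a"])
          show "dim_vec y = n" using a A by simp
          show "\<And>t. t < n \<Longrightarrow> y $ t \<in> {0,1}" using a A bA unfolding binary_mat_def by auto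
          show "j*m+a < d*m + d*Q" using jm by simp
          show "\<And>t. t < n \<Longrightarrow> B $$ (j*n+t, j*m+a) = y $ t"
            using B_ent inb[OF j] jm dv divmod_blk a A by auto
          show "\<And>i. i < d*n \<Longrightarrow> i div n \<noteq> j \<Longrightarrow> B $$ (i,j*m+a) = 0"
            using B_ent jm dv by auto
        qed
      qed
      have jQ: "j*Q + b < d*Q" if "b < Q" for b
      proof -
        have "j*Q + b < (j+1)*Q" using that by simp
        also have "\<dots> \<le> d*Q" using j by (intro mult_right_mono) auto
        finally show ?thesis .
      qed
      have spanP: "bspans W y" if b: "b < Q" and yd: "dim_vec y = n" and yb: "\<And>t. t < n \<Longrightarrow> y $ t \<in> {0,1}"
        and ye: "\<And>t. t < n \<Longrightarrow> P $$ (t,b) = y $ t" for b y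
      proof (rule spanY[of y "d*m + (j*Q+b)"])
        have dv: "(j*Q+b) div Q = j \<and> (j*Q+b) mod Q = b" using divmod_blk[OF b] by simp
        show "dim_vec y = n" by fact
        show "\<And>t. t < n \<Longrightarrow> y $ t \<in> {0,1}" by fact
        show c: "d*m + (j*Q+b) < d*m + d*Q" using jQ[OF b] by simp
        show "\<And>t. t < n \<Longrightarrow> B $$ (j*n+t, d*m + (j*Q+b)) = y $ t"
          using B_ent[OF _ c] inb[OF j] dv divmod_blk ye by auto
        show "\<And>i. i < d*n \<Longrightarrow> i div n \<noteq> j \<Longrightarrow> B $$ (i,d*m + (j*Q+b)) = 0"
          using B_ent[OF _ c] dv by auto
      qed
      have W1: "bspans_set W U1" unfolding bspans_set_def
      proof
        fix y assume "y \<in> U1"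
        then obtain b where b: "b < p1" "y = col U1m b" using U1m cU1 unfolding p1_def
          by (metis carrier_matD(2) cols_length cols_nth in_set_conv_nth)
        show "bspans W y"
        proof (rule spanP[of b])
          show "b < Q" using b unfolding Q_def by simp
          show "dim_vec y = n" using b U1m by simp
          show "\<And>t. t < n \<Longrightarrow> y $ t \<in> {0,1}" using b U1m bU1m unfolding p1_def by auto
          show "\<And>t. t < n \<Longrightarrow> P $$ (t,b) = y $ t" using b U1m P_ent unfolding Q_def p1_def by auto
        qed
      qed
      have W2: "bspans_set W U2" unfolding bspans_set_def
      proof
        fix y assume "y \<in> U2"
        then obtain b where b: "b < p2" "y = col U2m b" using U2m cU2 unfolding p2_def
          by (metis carrier_matD(2) cols_length cols_nth in_set_conv_nth)
        show "bspans W y"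
        proof (rule spanP[of "p1 + b"])
          show "p1 + b < Q" using b unfolding Q_def by simp
          show "dim_vec y = n" using b U2m by simp
          show "\<And>t. t < n \<Longrightarrow> y $ t \<in> {0,1}" using b U2m bU2m unfolding p2_def by auto
          show "\<And>t. t < n \<Longrightarrow> P $$ (t,p1 + b) = y $ t" using b U2m P_ent unfolding Q_def p2_def by auto
        qed
      qed
      have "p1 < card W" unfolding p1_def by (rule core[OF s1 s2 ne Wb W1 W2])
      also have "card W \<le> card (blk U n j)" unfolding W_def by (rule card_image_le[OF finb])
      finally show ?thesis by simp
    qed
    have finblk: "\<And>j. finite (blk U n j)" unfolding blk_def by auto
    have "d * (p1 + 1) = (\<Sum>j<d. p1 + 1)" by simp
    also have "\<dots> \<le> (\<Sum>j<d. card (blk U n j))" by (intro sum_mono cnt) auto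
    also have "\<dots> = card (\<Union>j<d. blk U n j)"
      by (intro card_UN_disjoint[symmetric] finite_lessThan) (simp_all add: finblk blk_disj)
    also have "\<dots> \<le> card {..<r}" by (intro card_mono) (use U in \<open>auto simp: blk_def\<close>)
    finally show ?thesis by simp
  qed
  let ?Pr = "\<lambda>r. \<exists>U V. U \<in> carrier_mat (dim_row B) r \<and> V \<in> carrier_mat r (dim_col B)
       \<and> binary_mat U \<and> binary_mat V \<and> B = U * V"
  have ex: "?Pr (d*n)"
  proof (intro exI conjI)
    show "1\<^sub>m (d*n) \<in> carrier_mat (dim_row B) (d*n)" using B_dim by simp
    show "B \<in> carrier_mat (d*n) (dim_col B)" using B_dim by simp
    show "binary_mat (1\<^sub>m (d*n) :: nat mat)" unfolding binary_mat_def by auto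
    show "binary_mat B" by (rule bB)
    show "B = 1\<^sub>m (d*n) * B" using B_dim by simp
  qed
  define r0 where "r0 = (LEAST r. ?Pr r)"
  have "?Pr r0" unfolding r0_def by (rule LeastI_ex) (use ex in blast)
  then obtain U V where UV: "U \<in> carrier_mat (d*n) r0" "V \<in> carrier_mat r0 (d*m + d*Q)"
       "binary_mat U" "binary_mat V" "B = U * V" using B_dim by auto
  have r0b: "d * (p1 + 1) \<le> r0" by (rule main[OF UV])
  have "k \<le> p1" using rank_le[OF A b1 U1m cU1] assms(3) unfolding p1_def by simp
  then have "k * d + d \<le> d * (p1 + 1)" by (simp add: algebra_simps)
  also have "\<dots> \<le> R_binary B" using r0b unfolding r0_def R_binary_def .
  finally show ?thesis unfolding B_def P_def .
qed

end
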